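(* Let $X$ be a finite set with $n\ge1$ elements. The number of uniformizable topologies on $X$, and also the number of topologies on $X$ that are both uniformizable and functional Alexandroff, equals the Bell number $B_n$ (the number of partitions of $X$), where $B_0=B_1=1$ and $B_{k+1}=\sum_{i=0}^{k}\binom{k}{i}B_i$ for $k\ge1$.
   Context: A topology on $X$ is uniformizable if it is induced by some uniform structure on $X$. For $f:X\to X$ and $a\in X$ let $V_f(a):=\{x\in X:\exists n\ge0,\ f^n(x)=a\}$; the topology with basis $\{V_f(a):a\in X\}$ is the functional Alexandroff topology associated to $f$, and a topology is functional Alexandroff if it equals the functional Alexandroff topology of some self-map of $X$. *)

theory Defs
  imports "HOL-Analysis.Analysis"
begin

definition uniformity_on :: "'a set \<Rightarrow> ('a \<times> 'a) set set \<Rightarrow> bool" where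
  "uniformity_on X \<U> \<longleftrightarrow>
     \<U> \<noteq> {} \<and>
     (\<forall>U\<in>\<U>. Id_on X \<subseteq> U \<and> U \<subseteq> X \<times> X) \<and>
     (\<forall>U\<in>\<U>. \<forall>V. U \<subseteq> V \<and> V \<subseteq> X \<times> X \<longrightarrow> V \<in> \<U>) \<and>
     (\<forall>U\<in>\<U>. \<forall>V\<in>\<U>. U \<inter> V \<in> \<U>) \<and>
     (\<forall>U\<in>\<U>. U\<inverse> \<in> \<U>) \<and>
     (\<forall>U\<in>\<U>. \<exists>V\<in>\<U>. V O V \<subseteq> U)"

definition uniform_open :: "'a set \<Rightarrow> ('a \<times> 'a) set set \<Rightarrow> 'a set \<Rightarrow> bool" where
  "uniform_open X \<U> G \<longleftrightarrow> G \<subseteq> X \<and> (\<forall>x\<in>G. \<exists>U\<in>\<U>. U `` {x} \<subseteq> G)"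

definition uniformizable :: "'a topology \<Rightarrow> bool" where
  "uniformizable T \<longleftrightarrow>
     (\<exists>\<U>. uniformity_on (topspace T) \<U> \<and> (\<forall>G. openin T G \<longleftrightarrow> uniform_open (topspace T) \<U> G))"

definition Vf :: "'a set \<Rightarrow> ('a \<Rightarrow> 'a) \<Rightarrow> 'a \<Rightarrow> 'a set" where
  "Vf X f a = {x\<in>X. \<exists>n. (f ^^ n) x = a}"

definition functional_alexandroff :: "'a topology \<Rightarrow> bool" where
  "functional_alexandroff T \<longleftrightarrow>
     (\<exists>f. (\<forall>x\<in>topspace T. f x \<in> topspace T) \<and>
          (\<forall>G. openin T G \<longleftrightarrow>
                 (\<exists>\<B>. \<B> \<subseteq> Vf (topspace T) f ` topspace T \<and> G = \<Union>\<B>)))"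

fun bell :: "nat \<Rightarrow> nat" where
  "bell 0 = 1"
| "bell (Suc k) = (\<Sum>i=0..k. (k choose i) * bell i)"

end

theory Submission
  imports Defs
begin


definition eqrel :: "'a set \<Rightarrow> ('a \<times> 'a) set \<Rightarrow> bool" where
  "eqrel X R \<longleftrightarrow> R \<subseteq> X \<times> X \<and> (\<forall>x\<in>X. (x,x) \<in> R) \<and> sym R \<and> trans R"

definition EQ :: "'a set \<Rightarrow> ('a \<times> 'a) set set" where
  "EQ X = {R. eqrel X R}"

lemma finite_EQ: "finite X \<Longrightarrow> finite (EQ X)"
  by (rule finite_subset[of _ "Pow (X \<times> X)"]) (auto simp: EQ_def eqrel_def)

lemma EQ_empty: "EQ {} = {{}}"
  by (auto simp: EQ_def eqrel_def sym_def trans_def)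

lemma EQ_insert_bij:
  assumes "x \<notin> Y"
  shows "bij_betw (\<lambda>R. (R``{x} - {x}, R \<inter> ((Y - (R``{x} - {x})) \<times> (Y - (R``{x} - {x})))))
           (EQ (insert x Y)) (SIGMA S:Pow Y. EQ (Y - S))"
proof (rule bij_betw_byWitness[where f'="\<lambda>(S,Q). Q \<union> (insert x S \<times> insert x S)"])
  show "\<forall>R\<in>EQ (insert x Y). (\<lambda>(S,Q). Q \<union> (insert x S \<times> insert x S))
          (R``{x} - {x}, R \<inter> ((Y - (R``{x} - {x})) \<times> (Y - (R``{x} - {x})))) = R"
  proof
    fix R assume "R \<in> EQ (insert x Y)"
    hence R: "R \<subseteq> insert x Y \<times> insert x Y" "\<And>z. z \<in> insert x Y \<Longrightarrow> (z,z) \<in> R" "sym R" "trans R"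
      by (auto simp: EQ_def eqrel_def)
    have xx: "(x,x) \<in> R" using R by auto
    have eq1: "insert x (R``{x} - {x}) = R``{x}" using xx by auto
    have eq2: "R = (R \<inter> ((Y - (R``{x} - {x})) \<times> (Y - (R``{x} - {x})))) \<union> (R``{x} \<times> R``{x})"
    proof (intro equalityI subsetI)
      fix p assume p: "p \<in> R"
      obtain a b where ab: "p = (a,b)" by force
      show "p \<in> (R \<inter> ((Y - (R``{x} - {x})) \<times> (Y - (R``{x} - {x})))) \<union> (R``{x} \<times> R``{x})"
      proof (cases "(x,a) \<in> R")
        case True
        then have "(x,b) \<in> R" using p ab R(4) by (meson transD)
        then show ?thesis using True ab by auto
      next
        case False
        then have "(x,b) \<notin> R" using p ab R(3,4) by (meson symD transD)
        moreover have "a \<in> insert x Y" "b \<in> insert x Y" using R(1) p ab by auto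
        ultimately show ?thesis using False ab p xx by auto
      qed
    next
      fix p assume p: "p \<in> (R \<inter> ((Y - (R``{x} - {x})) \<times> (Y - (R``{x} - {x})))) \<union> (R``{x} \<times> R``{x})"
      obtain a b where ab: "p = (a,b)" by force
      show "p \<in> R"
      proof (cases "p \<in> R")
        case False
        then have "(x,a) \<in> R" "(x,b) \<in> R" using p ab by auto
        then have "(a,b) \<in> R" using R(3,4) by (meson symD transD)
        then show ?thesis using ab by simp
      qed simp
    qed
    show "(\<lambda>(S,Q). Q \<union> (insert x S \<times> insert x S))
          (R``{x} - {x}, R \<inter> ((Y - (R``{x} - {x})) \<times> (Y - (R``{x} - {x})))) = R"
      unfolding prod.case eq1 using eq2[symmetric] .
  qed
next
  show "\<forall>a'\<in>(SIGMA S:Pow Y. EQ (Y - S)). (\<lambda>R. (R``{x} - {x}, R \<inter> ((Y - (R``{x} - {x})) \<times> (Y - (R``{x} - {x})))))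
          ((\<lambda>(S,Q). Q \<union> (insert x S \<times> insert x S)) a') = a'"
  proof
    fix a' assume "a' \<in> (SIGMA S:Pow Y. EQ (Y - S))"
    then obtain S Q where a': "a' = (S,Q)" "S \<subseteq> Y" "Q \<subseteq> (Y - S) \<times> (Y - S)"
      by (auto simp: EQ_def eqrel_def)
    have 1: "(Q \<union> (insert x S \<times> insert x S))``{x} - {x} = S"
      using a' assms by auto
    have 2: "(Q \<union> (insert x S \<times> insert x S)) \<inter> ((Y - S) \<times> (Y - S)) = Q"
      using a' assms by auto
    show "(\<lambda>R. (R``{x} - {x}, R \<inter> ((Y - (R``{x} - {x})) \<times> (Y - (R``{x} - {x})))))
          ((\<lambda>(S,Q). Q \<union> (insert x S \<times> insert x S)) a') = a'"
      using 1 2 a'(1) by simp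
  qed
next
  show "(\<lambda>R. (R``{x} - {x}, R \<inter> ((Y - (R``{x} - {x})) \<times> (Y - (R``{x} - {x}))))) ` EQ (insert x Y)
        \<subseteq> (SIGMA S:Pow Y. EQ (Y - S))"
  proof (clarsimp)
    fix R assume "R \<in> EQ (insert x Y)"
    hence R: "R \<subseteq> insert x Y \<times> insert x Y" "\<And>z. z \<in> insert x Y \<Longrightarrow> (z,z) \<in> R" "sym R" "trans R"
      by (auto simp: EQ_def eqrel_def)
    show "R `` {x} - {x} \<subseteq> Y \<and> R \<inter> (Y - (R `` {x} - {x})) \<times> (Y - (R `` {x} - {x})) \<in> EQ (Y - (R `` {x} - {x}))"
    proof
      show "R `` {x} - {x} \<subseteq> Y" using R(1) by auto
      let ?Z = "Y - (R `` {x} - {x})"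
      show "R \<inter> ?Z \<times> ?Z \<in> EQ ?Z"
        unfolding EQ_def eqrel_def mem_Collect_eq
      proof (intro conjI)
        show "R \<inter> ?Z \<times> ?Z \<subseteq> ?Z \<times> ?Z" by auto
        show "\<forall>z\<in>?Z. (z, z) \<in> R \<inter> ?Z \<times> ?Z" using R(2) by auto
        show "sym (R \<inter> ?Z \<times> ?Z)" using R(3) unfolding sym_def by auto
        show "trans (R \<inter> ?Z \<times> ?Z)" using R(4) unfolding trans_def by auto
      qed
    qed
  qed
next
  have key: "\<And>S Q. S \<subseteq> Y \<Longrightarrow> Q \<in> EQ (Y - S) \<Longrightarrow> Q \<union> insert x S \<times> insert x S \<in> EQ (insert x Y)"
  proof -
    fix S Q assume S: "S \<subseteq> Y" and "Q \<in> EQ (Y - S)"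
    hence Q: "Q \<subseteq> (Y - S) \<times> (Y - S)" "\<And>z. z \<in> Y - S \<Longrightarrow> (z,z) \<in> Q" "sym Q" "trans Q"
      by (auto simp: EQ_def eqrel_def)
    show "Q \<union> insert x S \<times> insert x S \<in> EQ (insert x Y)"
      unfolding EQ_def eqrel_def mem_Collect_eq
    proof (intro conjI)
      show "Q \<union> insert x S \<times> insert x S \<subseteq> insert x Y \<times> insert x Y" using Q S by auto
      show "\<forall>z\<in>insert x Y. (z, z) \<in> Q \<union> insert x S \<times> insert x S" using Q by auto
      show "sym (Q \<union> insert x S \<times> insert x S)" using Q(3) by (auto simp: sym_def)
      show "trans (Q \<union> insert x S \<times> insert x S)"
        unfolding trans_def
      proof (intro allI impI)
        fix a b c assume ab: "(a,b) \<in> Q \<union> insert x S \<times> insert x S" and bc: "(b,c) \<in> Q \<union> insert x S \<times> insert x S"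
        show "(a,c) \<in> Q \<union> insert x S \<times> insert x S"
        proof (cases "(a,b) \<in> Q")
          case True
          then have "b \<in> Y - S" using Q by auto
          then have "b \<notin> insert x S" using assms by auto
          then have "(b,c) \<in> Q" using bc by auto
          then show ?thesis using True Q(4) by (meson UnI1 transD)
        next
          case False
          then have "a \<in> insert x S" "b \<in> insert x S" using ab by auto
          then have "b \<notin> Y - S" using assms S by auto
          then have "(b,c) \<notin> Q" using Q by auto
          then have "c \<in> insert x S" using bc by auto
          then show ?thesis using \<open>a \<in> insert x S\<close> by auto
        qed
      qed
    qed
  qed
  show "(\<lambda>(S,Q). Q \<union> (insert x S \<times> insert x S)) ` (SIGMA S:Pow Y. EQ (Y - S)) \<subseteq> EQ (insert x Y)"
  proof (rule image_subsetI)
    fix p assume "p \<in> (SIGMA S:Pow Y. EQ (Y - S))"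
    then obtain S Q where "p = (S,Q)" "S \<subseteq> Y" "Q \<in> EQ (Y - S)" by blast
    then show "(\<lambda>(S,Q). Q \<union> (insert x S \<times> insert x S)) p \<in> EQ (insert x Y)"
      using key by simp
  qed
qed

lemma card_EQ: "finite X \<Longrightarrow> card (EQ X) = bell (card X)"
proof (induction "card X" arbitrary: X rule: less_induct)
  case less
  show ?case
  proof (cases "X = {}")
    case True then show ?thesis by (simp add: EQ_empty)
  next
    case False
    then obtain x where x: "x \<in> X" by auto
    define Y where "Y = X - {x}"
    have XY: "X = insert x Y" "x \<notin> Y" using x by (auto simp: Y_def)
    have fY: "finite Y" using less.prems by (simp add: Y_def)
    have cX: "card X = Suc (card Y)" using XY fY by simp
    have "card (EQ X) = card (SIGMA S:Pow Y. EQ (Y - S))"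
      using bij_betw_same_card[OF EQ_insert_bij[OF XY(2)]] XY(1) by simp
    also have "\<dots> = (\<Sum>S\<in>Pow Y. card (EQ (Y - S)))"
      using fY by (simp add: finite_EQ)
    also have "\<dots> = (\<Sum>S\<in>Pow Y. bell (card (Y - S)))"
    proof (rule sum.cong[OF refl])
      fix S assume "S \<in> Pow Y"
      have "card (Y - S) < card X" using card_mono[OF fY, of "Y - S"] cX by auto
      moreover have "finite (Y - S)" using fY by simp
      ultimately show "card (EQ (Y - S)) = bell (card (Y - S))" by (rule less.hyps)
    qed
    also have "\<dots> = (\<Sum>T\<in>Pow Y. bell (card T))"
      by (rule sum.reindex_bij_witness[where i="\<lambda>T. Y - T" and j="\<lambda>T. Y - T"]) auto
    also have "\<dots> = (\<Sum>i\<in>{0..card Y}. (\<Sum>T\<in>{T\<in>Pow Y. card T = i}. bell (card T)))"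
    proof (rule sum.group[symmetric])
      show "finite (Pow Y)" using fY by simp
      show "finite {0..card Y}" by simp
      show "card ` Pow Y \<subseteq> {0..card Y}"
      proof
        fix i assume "i \<in> card ` Pow Y"
        then obtain T where "T \<subseteq> Y" "i = card T" by blast
        then show "i \<in> {0..card Y}" using card_mono[OF fY] by simp
      qed
    qed
    also have "\<dots> = (\<Sum>i\<in>{0..card Y}. (card Y choose i) * bell i)"
    proof (rule sum.cong[OF refl])
      fix i
      have "(\<Sum>T\<in>{T\<in>Pow Y. card T = i}. bell (card T)) = (\<Sum>T\<in>{T\<in>Pow Y. card T = i}. bell i)"
        by (rule sum.cong) auto
      also have "\<dots> = card {T\<in>Pow Y. card T = i} * bell i" by simp
      also have "card {T\<in>Pow Y. card T = i} = card {T. T \<subseteq> Y \<and> card T = i}"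
        by (rule arg_cong[where f=card]) auto
      also have "card {T. T \<subseteq> Y \<and> card T = i} = (card Y choose i)" using n_subsets[OF fY] .
      finally show "(\<Sum>T\<in>{T\<in>Pow Y. card T = i}. bell (card T)) = (card Y choose i) * bell i" .
    qed
    also have "\<dots> = bell (card X)" using cX by simp
    finally show ?thesis .
  qed
qed



definition topo :: "'a set \<Rightarrow> ('a \<times> 'a) set \<Rightarrow> 'a topology" where
  "topo X R = topology (\<lambda>G. G \<subseteq> X \<and> (\<forall>x\<in>G. R``{x} \<subseteq> G))"

lemma openin_topo: "openin (topo X R) G \<longleftrightarrow> G \<subseteq> X \<and> (\<forall>x\<in>G. R``{x} \<subseteq> G)"
proof -
  have "istopology (\<lambda>G. G \<subseteq> X \<and> (\<forall>x\<in>G. R``{x} \<subseteq> G))"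
    unfolding istopology_def by blast
  then show ?thesis unfolding topo_def by simp
qed

lemma eqrel_class_sub: "eqrel X R \<Longrightarrow> y \<in> R``{x} \<Longrightarrow> R``{y} \<subseteq> R``{x}"
  unfolding eqrel_def trans_def by blast

lemma eqrel_class_eq: "eqrel X R \<Longrightarrow> y \<in> R``{x} \<Longrightarrow> R``{y} = R``{x}"
  unfolding eqrel_def trans_def sym_def by blast

lemma eqrel_self: "eqrel X R \<Longrightarrow> x \<in> X \<Longrightarrow> x \<in> R``{x}"
  unfolding eqrel_def by blast

lemma eqrel_class_X: "eqrel X R \<Longrightarrow> R``{x} \<subseteq> X"
  unfolding eqrel_def by blast

lemma topspace_topo: "eqrel X R \<Longrightarrow> topspace (topo X R) = X"
proof -
  assume e: "eqrel X R"
  have "openin (topo X R) X" using e unfolding openin_topo eqrel_def by blast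
  then have "X \<subseteq> topspace (topo X R)" by (rule openin_subset)
  moreover have "topspace (topo X R) \<subseteq> X"
    unfolding topspace_def openin_topo by blast
  ultimately show ?thesis by blast
qed

lemma uniformizable_topo:
  assumes e: "eqrel X R" shows "uniformizable (topo X R)"
  unfolding uniformizable_def topspace_topo[OF e]
proof (intro exI conjI allI)
  let ?U = "{V. R \<subseteq> V \<and> V \<subseteq> X \<times> X}"
  have R: "R \<subseteq> X \<times> X" "\<And>x. x \<in> X \<Longrightarrow> (x,x) \<in> R" "sym R" "trans R" using e by (auto simp: eqrel_def)
  show "uniformity_on X ?U"
    unfolding uniformity_on_def
  proof (intro conjI)
    show "?U \<noteq> {}" using R(1) by blast
    show "\<forall>U\<in>?U. Id_on X \<subseteq> U \<and> U \<subseteq> X \<times> X" using R(2) by (auto simp: Id_on_def)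
    show "\<forall>U\<in>?U. \<forall>V. U \<subseteq> V \<and> V \<subseteq> X \<times> X \<longrightarrow> V \<in> ?U" by blast
    show "\<forall>U\<in>?U. \<forall>V\<in>?U. U \<inter> V \<in> ?U" by blast
    have RR: "R\<inverse> = R" using R(3) by (simp add: sym_conv_converse_eq)
    show "\<forall>U\<in>?U. U\<inverse> \<in> ?U"
    proof
      fix U assume "U \<in> ?U"
      then have "R \<subseteq> U" "U \<subseteq> X \<times> X" by auto
      then have "R\<inverse> \<subseteq> U\<inverse>" "U\<inverse> \<subseteq> X \<times> X" by auto
      then show "U\<inverse> \<in> ?U" using RR by simp
    qed
    have RO: "R O R \<subseteq> R" using R(4) by (simp add: trans_O_subset)
    show "\<forall>U\<in>?U. \<exists>V\<in>?U. V O V \<subseteq> U"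
    proof
      fix U assume "U \<in> ?U"
      then have "R O R \<subseteq> U" using RO by auto
      moreover have "R \<in> ?U" using R(1) by simp
      ultimately show "\<exists>V\<in>?U. V O V \<subseteq> U" by blast
    qed
  qed
  fix G
  show "openin (topo X R) G \<longleftrightarrow> uniform_open X ?U G"
    unfolding openin_topo uniform_open_def
  proof
    assume "G \<subseteq> X \<and> (\<forall>x\<in>G. R `` {x} \<subseteq> G)"
    then show "G \<subseteq> X \<and> (\<forall>x\<in>G. \<exists>U\<in>?U. U `` {x} \<subseteq> G)" using R(1) by blast
  next
    assume "G \<subseteq> X \<and> (\<forall>x\<in>G. \<exists>U\<in>?U. U `` {x} \<subseteq> G)"
    then show "G \<subseteq> X \<and> (\<forall>x\<in>G. R `` {x} \<subseteq> G)" by blast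
  qed
qed

lemma Inter_closed:
  assumes "finite F" "F \<noteq> {}" "F \<subseteq> U" "\<forall>A\<in>U. \<forall>B\<in>U. A \<inter> B \<in> U"
  shows "\<Inter>F \<in> U"
  using assms
proof (induction F rule: finite_ne_induct)
  case (singleton x) then show ?case by simp
next
  case (insert x F) then show ?case by simp
qed

lemma uniformizable_is_topo:
  assumes fin: "finite X" and ts: "topspace T = X" and u: "uniformizable T"
  shows "\<exists>R. eqrel X R \<and> T = topo X R"
proof -
  obtain U where uU: "uniformity_on X U" and op0: "\<forall>G. openin T G \<longleftrightarrow> uniform_open X U G"
    using u unfolding uniformizable_def ts by (elim exE conjE) (rule that)
  have op: "openin T G \<longleftrightarrow> uniform_open X U G" for G using op0 by (rule spec)
  have ne: "U \<noteq> {}" and sub: "\<And>V. V \<in> U \<Longrightarrow> Id_on X \<subseteq> V \<and> V \<subseteq> X \<times> X"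
    and int: "\<forall>A\<in>U. \<forall>B\<in>U. A \<inter> B \<in> U" and cv: "\<And>V. V \<in> U \<Longrightarrow> V\<inverse> \<in> U"
    and comp: "\<And>V. V \<in> U \<Longrightarrow> \<exists>W\<in>U. W O W \<subseteq> V"
  proof -
    have uu: "U \<noteq> {} \<and>
     (\<forall>W\<in>U. Id_on X \<subseteq> W \<and> W \<subseteq> X \<times> X) \<and>
     (\<forall>W\<in>U. \<forall>V. W \<subseteq> V \<and> V \<subseteq> X \<times> X \<longrightarrow> V \<in> U) \<and>
     (\<forall>W\<in>U. \<forall>V\<in>U. W \<inter> V \<in> U) \<and>
     (\<forall>W\<in>U. W\<inverse> \<in> U) \<and>
     (\<forall>W\<in>U. \<exists>V\<in>U. V O V \<subseteq> W)" using uU unfolding uniformity_on_def .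
    show "U \<noteq> {}" using uu by (rule conjunct1)
    show "\<And>V. V \<in> U \<Longrightarrow> Id_on X \<subseteq> V \<and> V \<subseteq> X \<times> X"
      using uu[THEN conjunct2, THEN conjunct1] by (rule bspec)
    show "\<forall>A\<in>U. \<forall>B\<in>U. A \<inter> B \<in> U"
      using uu[THEN conjunct2, THEN conjunct2, THEN conjunct2, THEN conjunct1] .
    show "\<And>V. V \<in> U \<Longrightarrow> V\<inverse> \<in> U"
      using uu[THEN conjunct2, THEN conjunct2, THEN conjunct2, THEN conjunct2, THEN conjunct1] by (rule bspec)
    show "\<And>V. V \<in> U \<Longrightarrow> \<exists>W\<in>U. W O W \<subseteq> V"
      using uu[THEN conjunct2, THEN conjunct2, THEN conjunct2, THEN conjunct2, THEN conjunct2] by (rule bspec)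
  qed
  have "U \<subseteq> Pow (X \<times> X)" using sub by blast
  moreover have "finite (Pow (X \<times> X))" using fin by simp
  ultimately have finU: "finite U" by (rule finite_subset)
  define E where "E = \<Inter>U"
  have EU: "E \<in> U" unfolding E_def by (rule Inter_closed[OF finU ne subset_refl int])
  have Emin: "\<And>V. V \<in> U \<Longrightarrow> E \<subseteq> V" unfolding E_def by blast
  have eq: "eqrel X E"
    unfolding eqrel_def
  proof (intro conjI)
    show "E \<subseteq> X \<times> X" using sub[OF EU] by blast
    show "\<forall>x\<in>X. (x, x) \<in> E"
    proof
      fix x assume "x \<in> X"
      then have "(x,x) \<in> Id_on X" by (rule Id_onI)
      then show "(x,x) \<in> E" using sub[OF EU] by blast
    qed
    have "E \<subseteq> E\<inverse>" using Emin[OF cv[OF EU]] .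
    then show "sym E" by (intro symI) blast
    obtain W where "W \<in> U" "W O W \<subseteq> E" using comp[OF EU] by blast
    then have "E O E \<subseteq> W O W" using relcomp_mono[OF Emin[of W] Emin[of W]] by simp
    then have "E O E \<subseteq> E" using \<open>W O W \<subseteq> E\<close> by (rule subset_trans)
    then show "trans E" by (intro transI) blast
  qed
  have "T = topo X E"
  proof (rule topology_eq[THEN iffD2], intro allI)
    fix G
    have "openin T G \<longleftrightarrow> uniform_open X U G" by (rule op)
    also have "\<dots> \<longleftrightarrow> G \<subseteq> X \<and> (\<forall>x\<in>G. E``{x} \<subseteq> G)"
      unfolding uniform_open_def
    proof (intro conj_cong refl ball_cong)
      fix x
      show "(\<exists>U\<in>U. U `` {x} \<subseteq> G) \<longleftrightarrow> E `` {x} \<subseteq> G"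
      proof
        assume "\<exists>V\<in>U. V `` {x} \<subseteq> G"
        then obtain V where "V \<in> U" "V `` {x} \<subseteq> G" by blast
        then show "E `` {x} \<subseteq> G" using Emin[of V] by blast
      next
        assume "E `` {x} \<subseteq> G"
        then show "\<exists>V\<in>U. V `` {x} \<subseteq> G" using EU by blast
      qed
    qed
    also have "\<dots> \<longleftrightarrow> openin (topo X E) G" by (simp add: openin_topo)
    finally show "openin T G \<longleftrightarrow> openin (topo X E) G" .
  qed
  then show ?thesis using eq by blast
qed

lemma topo_inj_aux:
  assumes ea: "eqrel X Ra" and tt: "topo X Ra = topo X Rb" and x: "x \<in> X"
  shows "Rb``{x} \<subseteq> Ra``{x}"
proof -
  have "openin (topo X Ra) (Ra``{x})"
    unfolding openin_topo using eqrel_class_X[OF ea] eqrel_class_sub[OF ea] by blast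
  then have "openin (topo X Rb) (Ra``{x})" using tt by simp
  then show "Rb``{x} \<subseteq> Ra``{x}" unfolding openin_topo using eqrel_self[OF ea x] by blast
qed

lemma topo_inj:
  assumes e1: "eqrel X R1" and e2: "eqrel X R2" and t: "topo X R1 = topo X R2"
  shows "R1 = R2"
proof -
  have c: "R1``{x} = R2``{x}" if "x \<in> X" for x
    using topo_inj_aux[OF e1 t that] topo_inj_aux[OF e2 t[symmetric] that] by blast
  have "R1 \<subseteq> X \<times> X" "R2 \<subseteq> X \<times> X" using e1 e2 by (auto simp: eqrel_def)
  then show ?thesis using c by blast
qed

definition cycB :: "'a set \<Rightarrow> ('a \<Rightarrow> 'a) \<Rightarrow> bool" where
  "cycB B g \<longleftrightarrow> (\<forall>x\<in>B. g x \<in> B) \<and> (\<forall>x\<in>B. \<forall>y\<in>B. \<exists>n. (g^^n) x = y)"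

lemma cyc_exists:
  assumes fin: "finite B" and ne: "B \<noteq> {}"
  shows "\<exists>g. cycB B g"
proof -
  define k where "k = card B"
  have kpos: "k > 0" using fin ne by (simp add: k_def card_gt_0_iff)
  obtain h where h: "bij_betw h {0..<k} B" using ex_bij_betw_nat_finite[OF fin] k_def by blast
  define h' where "h' = the_inv_into {0..<k} h"
  have inj: "inj_on h {0..<k}" and im: "h ` {0..<k} = B" using h by (auto simp: bij_betw_def)
  have hh: "h' (h i) = i" if "i < k" for i
    unfolding h'_def using the_inv_into_f_f[OF inj] that by simp
  define g where "g x = h (Suc (h' x) mod k)" for x
  have it: "(g^^n) (h i) = h ((i + n) mod k)" if "i < k" for i n
  proof (induction n)
    case 0 then show ?case using that by simp
  next
    case (Suc n)
    have "(g^^Suc n) (h i) = g (h ((i + n) mod k))" using Suc by simp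
    also have "\<dots> = h (Suc ((i + n) mod k) mod k)" unfolding g_def using hh kpos by simp
    also have "Suc ((i + n) mod k) mod k = (i + Suc n) mod k" by (simp add: mod_Suc_eq)
    finally show ?case .
  qed
  have "cycB B g"
    unfolding cycB_def
  proof (intro conjI ballI)
    fix x assume "x \<in> B"
    then obtain i where i: "i < k" "x = h i" using im by auto
    show "g x \<in> B" unfolding i(2) g_def using im kpos by auto
  next
    fix x y assume "x \<in> B" "y \<in> B"
    then obtain i j where ij: "i < k" "x = h i" "j < k" "y = h j" using im by force
    have "(g^^(j + k - i)) x = h ((i + (j + k - i)) mod k)" using it ij by simp
    also have "(i + (j + k - i)) mod k = j" using ij by simp
    finally show "\<exists>n. (g^^n) x = y" using ij by blast
  qed
  then show ?thesis by blast
qed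

lemma fa_topo:
  assumes fin: "finite X" and e: "eqrel X R"
  shows "functional_alexandroff (topo X R)"
proof -
  define gc where "gc C = (SOME g. cycB C g)" for C :: "'a set"
  have gcC: "cycB (R``{x}) (gc (R``{x}))" if "x \<in> X" for x
  proof -
    have "finite (R``{x})" using finite_subset[OF eqrel_class_X[OF e] fin] .
    moreover have "R``{x} \<noteq> {}" using eqrel_self[OF e that] by blast
    ultimately show ?thesis unfolding gc_def using cyc_exists someI_ex by metis
  qed
  define f where "f x = gc (R``{x}) x" for x
  have fit: "(f^^n) y = (gc (R``{x})^^n) y \<and> (f^^n) y \<in> R``{x}" if "x \<in> X" "y \<in> R``{x}" for x y n
  proof (induction n)
    case 0 then show ?case using that by simp
  next
    case (Suc n)
    let ?z = "(f^^n) y"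
    have z: "?z \<in> R``{x}" using Suc.IH by (rule conjunct2)
    have "R``{?z} = R``{x}" using eqrel_class_eq[OF e z] .
    then have "f ?z = gc (R``{x}) ?z" unfolding f_def by simp
    moreover have "gc (R``{x}) ?z \<in> R``{x}" using gcC[OF that(1)] z unfolding cycB_def by blast
    ultimately show ?case using Suc by simp
  qed
  have Vfeq: "Vf X f a = R``{a}" if a: "a \<in> X" for a
  proof (intro equalityI subsetI)
    fix x assume "x \<in> Vf X f a"
    then obtain n where x: "x \<in> X" "(f^^n) x = a" unfolding Vf_def by blast
    have "(f^^n) x \<in> R``{x}" using fit[OF x(1) eqrel_self[OF e x(1)], of n] by (rule conjunct2)
    then have "a \<in> R``{x}" using x(2) by simp
    then show "x \<in> R``{a}" using e unfolding eqrel_def sym_def by blast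
  next
    fix x assume xa: "x \<in> R``{a}"
    then have x: "x \<in> X" using eqrel_class_X[OF e] by blast
    have "a \<in> R``{x}" using xa e unfolding eqrel_def sym_def by blast
    then obtain n where "(gc (R``{x})^^n) x = a"
      using gcC[OF x] eqrel_self[OF e x] unfolding cycB_def by blast
    then have "(f^^n) x = a" using fit[OF x eqrel_self[OF e x], of n] by simp
    then show "x \<in> Vf X f a" using x unfolding Vf_def by blast
  qed
  have img: "Vf X f ` X = (\<lambda>a. R``{a}) ` X" using Vfeq by simp
  show ?thesis
    unfolding functional_alexandroff_def topspace_topo[OF e]
  proof (rule exI[of _ f], unfold img, intro conjI ballI allI)
    fix x assume x: "x \<in> X"
    have "f x = gc (R``{x}) x" unfolding f_def ..
    moreover have "gc (R``{x}) x \<in> R``{x}"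
      using gcC[OF x] eqrel_self[OF e x] unfolding cycB_def by blast
    ultimately show "f x \<in> X" using eqrel_class_X[OF e] by auto
  next
    fix G
    show "openin (topo X R) G \<longleftrightarrow> (\<exists>\<B>. \<B> \<subseteq> (\<lambda>a. R``{a}) ` X \<and> G = \<Union>\<B>)"
      unfolding openin_topo
    proof
      assume G: "G \<subseteq> X \<and> (\<forall>x\<in>G. R``{x} \<subseteq> G)"
      have "(\<lambda>a. R``{a}) ` G \<subseteq> (\<lambda>a. R``{a}) ` X" using G by blast
      moreover have "G = \<Union>((\<lambda>a. R``{a}) ` G)"
      proof (intro equalityI subsetI)
        fix x assume "x \<in> G"
        then have "x \<in> R``{x}" using G eqrel_self[OF e] by blast
        then show "x \<in> \<Union>((\<lambda>a. R``{a}) ` G)" using \<open>x \<in> G\<close> by blast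
      next
        fix x assume "x \<in> \<Union>((\<lambda>a. R``{a}) ` G)"
        then obtain a where "a \<in> G" "x \<in> R``{a}" by blast
        then show "x \<in> G" using G by blast
      qed
      ultimately show "\<exists>\<B>. \<B> \<subseteq> (\<lambda>a. R``{a}) ` X \<and> G = \<Union>\<B>" by blast
    next
      assume "\<exists>\<B>. \<B> \<subseteq> (\<lambda>a. R``{a}) ` X \<and> G = \<Union>\<B>"
      then obtain B where B: "B \<subseteq> (\<lambda>a. R``{a}) ` X" "G = \<Union>B" by blast
      show "G \<subseteq> X \<and> (\<forall>x\<in>G. R``{x} \<subseteq> G)"
      proof
        show "G \<subseteq> X" using B eqrel_class_X[OF e] by blast
        show "\<forall>x\<in>G. R``{x} \<subseteq> G"
        proof
          fix x assume "x \<in> G"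
          then obtain a where a: "a \<in> X" "x \<in> R``{a}" "R``{a} \<in> B" using B by blast
          then have "R``{x} \<subseteq> R``{a}" using eqrel_class_sub[OF e] by blast
          then show "R``{x} \<subseteq> G" using a B by blast
        qed
      qed
    qed
  qed
qed


lemma set_eq_img:
  assumes fin: "finite X"
  shows "{T :: 'a topology. topspace T = X \<and> uniformizable T} = topo X ` EQ X"
    and "{T :: 'a topology. topspace T = X \<and> uniformizable T \<and> functional_alexandroff T} = topo X ` EQ X"
proof -
  have a: "T \<in> topo X ` EQ X" if "topspace T = X" "uniformizable T" for T :: "'a topology"
    using uniformizable_is_topo[OF fin that] unfolding EQ_def by blast
  have b: "topspace T = X \<and> uniformizable T \<and> functional_alexandroff T" if "T \<in> topo X ` EQ X" for T
  proof -
    from that obtain R where R: "eqrel X R" "T = topo X R" unfolding EQ_def by blast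
    show ?thesis using R topspace_topo[OF R(1)] uniformizable_topo[OF R(1)] fa_topo[OF fin R(1)] by simp
  qed
  show "{T :: 'a topology. topspace T = X \<and> uniformizable T} = topo X ` EQ X"
    using a b by blast
  show "{T :: 'a topology. topspace T = X \<and> uniformizable T \<and> functional_alexandroff T} = topo X ` EQ X"
    using a b by blast
qed

lemma card_img:
  assumes fin: "finite X"
  shows "card (topo X ` EQ X) = bell (card X)"
proof -
  have "inj_on (topo X) (EQ X)"
  proof (rule inj_onI)
    fix R1 R2 assume "R1 \<in> EQ X" "R2 \<in> EQ X" "topo X R1 = topo X R2"
    then show "R1 = R2" using topo_inj unfolding EQ_def by blast
  qed
  then have "card (topo X ` EQ X) = card (EQ X)" by (rule card_image)
  also have "\<dots> = bell (card X)" using card_EQ[OF fin] .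
  finally show ?thesis .
qed

theorem mainTheorem6:
  fixes X :: "'a set" and n :: nat
  assumes "finite X" and "card X = n" and "n \<ge> 1"
  shows "card {T :: 'a topology. topspace T = X \<and> uniformizable T} = bell n \<and>
         card {T :: 'a topology. topspace T = X \<and> uniformizable T \<and> functional_alexandroff T} = bell n"
  using set_eq_img[OF assms(1)] card_img[OF assms(1)] assms(2) by simp

end
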